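(* Let $a\in \mathcal{A}$. Then the following are equivalent: (1) $a$ has a generalized core-EP inverse. (2) There exist $z,y\in \mathcal{A}$ such that $a=z+y$, $z^*y=yz=0$, $z$ has a core inverse, and $y\in \mathcal{A}^{qnil}$. (3) There exist $z,y\in \mathcal{A}$ such that $a=z+y$, $yz=0$, $z$ has a core inverse, and $y\in \mathcal{A}^{qnil}$. In this case, the generalized core-EP inverse of $a$ equals the core inverse of $z$.
   Context: $\mathcal{A}$ is a complex Banach *-algebra with identity, $\mathcal{A}^{qnil}$ its quasinilpotents. The core inverse of $z$ is the unique $x$ with $zx^2=x$, $(zx)^*=zx$, $xz^2=z$. The generalized core-EP inverse of $a$ is the unique $x$ with $ax^2=x$, $(ax)^*=ax$, $\lim_{n\to\infty}\|a^n-xa^{n+1}\|^{1/n}=0$ (the case $w=1$ of the weighted notions). *)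

theory Defs
  imports Complex_Main
begin

class cbanach_star_algebra = banach + real_normed_algebra_1 +
  fixes scaleC :: "complex \<Rightarrow> 'a \<Rightarrow> 'a"
    and adj :: "'a \<Rightarrow> 'a"
  assumes scaleC_add_right: "scaleC c (x + y) = scaleC c x + scaleC c y"
    and scaleC_add_left: "scaleC (c + d) x = scaleC c x + scaleC d x"
    and scaleC_scaleC: "scaleC c (scaleC d x) = scaleC (c * d) x"
    and scaleC_one: "scaleC 1 x = x"
    and scaleR_scaleC: "scaleR r x = scaleC (complex_of_real r) x"
    and norm_scaleC: "norm (scaleC c x) = cmod c * norm x"
    and scaleC_mult_left: "scaleC c x * y = scaleC c (x * y)"
    and scaleC_mult_right: "x * scaleC c y = scaleC c (x * y)"
    and adj_adj: "adj (adj x) = x"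
    and adj_add: "adj (x + y) = adj x + adj y"
    and adj_mult: "adj (x * y) = adj y * adj x"
    and adj_scaleC: "adj (scaleC c x) = scaleC (cnj c) (adj x)"

definition invertible_el :: "'a::cbanach_star_algebra \<Rightarrow> bool" where
  "invertible_el x \<longleftrightarrow> (\<exists>b. b * x = 1 \<and> x * b = 1)"

definition spectrum :: "'a::cbanach_star_algebra \<Rightarrow> complex set" where
  "spectrum x = {l. \<not> invertible_el (scaleC l 1 - x)}"

definition qnil :: "'a::cbanach_star_algebra set" where
  "qnil = {y. spectrum y = {0}}"

definition is_core_inv :: "'a::cbanach_star_algebra \<Rightarrow> 'a \<Rightarrow> bool" where
  "is_core_inv z x \<longleftrightarrow> z * x^2 = x \<and> adj (z * x) = z * x \<and> x * z^2 = z"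

definition is_gcoreEP_inv :: "'a::cbanach_star_algebra \<Rightarrow> 'a \<Rightarrow> bool" where
  "is_gcoreEP_inv a x \<longleftrightarrow> a * x^2 = x \<and> adj (a * x) = a * x \<and>
     ((\<lambda>n. norm (a^n - x * a^(n+1)) powr (1 / real n)) \<longlonglongrightarrow> 0)"

end

theory Submission
  imports Defs "HOL-Analysis.Analysis"
begin


definition oc :: "complex \<Rightarrow> 'a::cbanach_star_algebra" where
  "oc c = scaleC c 1"

lemma scaleC_zero_left: "scaleC 0 (x::'a::cbanach_star_algebra) = 0"
proof -
  have "scaleC 0 x = scaleC 0 x + scaleC 0 x" using scaleC_add_left[of 0 0 x] by simp
  thus ?thesis by simp
qed

lemma oc_mult: "oc (a * b) = (oc a * oc b :: 'a::cbanach_star_algebra)"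
  unfolding oc_def by (simp add: scaleC_mult_left scaleC_scaleC)

lemma oc_add: "oc (a + b) = (oc a + oc b :: 'a::cbanach_star_algebra)"
  unfolding oc_def by (simp add: scaleC_add_left)

lemma oc_0[simp]: "oc 0 = (0 :: 'a::cbanach_star_algebra)"
  unfolding oc_def by (simp add: scaleC_zero_left)

lemma oc_1[simp]: "oc 1 = (1 :: 'a::cbanach_star_algebra)"
  unfolding oc_def by (simp add: scaleC_one)

lemma oc_minus: "oc (- a) = - (oc a :: 'a::cbanach_star_algebra)"
proof -
  have "oc a + oc (- a) = (0::'a)" using oc_add[of a "-a", where 'a='a] by simp
  thus ?thesis by (metis minus_unique)
qed

lemma oc_diff: "oc (a - b) = (oc a - oc b :: 'a::cbanach_star_algebra)"
proof -
  have "oc (a - b) = (oc (a + - b)::'a)" by simp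
  thus ?thesis by (simp only: oc_add oc_minus diff_conv_add_uminus)
qed

lemma oc_comm: "oc c * x = x * (oc c :: 'a::cbanach_star_algebra)"
  unfolding oc_def by (simp add: scaleC_mult_left scaleC_mult_right)

lemma oc_lcomm: "x * (oc c * y) = oc c * (x * (y :: 'a::cbanach_star_algebra))"
  by (metis mult.assoc oc_comm)

lemma norm_oc: "norm (oc c :: 'a::cbanach_star_algebra) = cmod c"
  unfolding oc_def by (simp add: norm_scaleC)

lemma oc_power: "oc (c ^ n) = (oc c ^ n :: 'a::cbanach_star_algebra)"
  by (induction n) (simp_all add: oc_mult)

lemma oc_of_nat: "oc (of_nat n) = (of_nat n :: 'a::cbanach_star_algebra)"
  by (induction n) (simp_all add: oc_add)

lemma oc_sum: "oc (sum g A) = (sum (\<lambda>i. oc (g i)) A :: 'a::cbanach_star_algebra)"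
  by (induction A rule: infinite_finite_induct) (simp_all add: oc_add)

lemma scaleC_oc: "scaleC c x = oc c * (x::'a::cbanach_star_algebra)"
  unfolding oc_def by (simp add: scaleC_mult_left)


definition small :: "(nat \<Rightarrow> 'b::real_normed_vector) \<Rightarrow> bool" where
  "small u \<longleftrightarrow> (\<forall>e>0. \<exists>N. \<forall>n\<ge>N. norm (u n) \<le> e ^ n)"

lemma powr_to_pow:
  assumes "0 < n" "0 \<le> (x::real)" "x powr (1 / real n) \<le> e"
  shows "x \<le> e ^ n"
proof (cases "x = 0")
  case True
  then show ?thesis using assms by simp
next
  case False
  then have xp: "0 < x" using assms by simp
  have "x = (x powr (1 / real n)) ^ n"
    using xp assms(1) by (simp add: powr_power)
  also have "\<dots> \<le> e ^ n" using assms by (intro power_mono) auto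
  finally show ?thesis .
qed

lemma pow_to_powr:
  assumes "0 < n" "0 \<le> (x::real)" "0 \<le> e" "x \<le> e ^ n"
  shows "x powr (1 / real n) \<le> e"
proof -
  have "x powr (1 / real n) \<le> (e ^ n) powr (1 / real n)"
    using assms by (intro powr_mono2) auto
  also have "\<dots> = e"
  proof (cases "e = 0")
    case True then show ?thesis using assms by simp
  next
    case False
    then have "0 < e" using assms by simp
    then have "(e ^ n) powr (1 / real n) = (e powr real n) powr (1 / real n)"
      by (simp add: powr_realpow)
    also have "\<dots> = e" using \<open>0 < e\<close> assms(1) by (simp add: powr_powr)
    finally show ?thesis .
  qed
  finally show ?thesis .
qed

lemma small_iff:
  "((\<lambda>n. norm (u n) powr (1 / real n)) \<longlonglongrightarrow> 0) \<longleftrightarrow> small u"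
proof
  assume L: "(\<lambda>n. norm (u n) powr (1 / real n)) \<longlonglongrightarrow> 0"
  show "small u" unfolding small_def
  proof (intro allI impI)
    fix e :: real assume "e > 0"
    then obtain N where N: "\<forall>n\<ge>N. norm (norm (u n) powr (1 / real n) - 0) < e"
      using L unfolding LIMSEQ_iff by blast
    show "\<exists>N. \<forall>n\<ge>N. norm (u n) \<le> e ^ n"
    proof (intro exI allI impI)
      fix n assume "max N 1 \<le> n"
      then have "norm (u n) powr (1 / real n) \<le> e" using N by fastforce
      then show "norm (u n) \<le> e ^ n" using \<open>max N 1 \<le> n\<close> by (intro powr_to_pow) auto
    qed
  qed
next
  assume S: "small u"
  show "(\<lambda>n. norm (u n) powr (1 / real n)) \<longlonglongrightarrow> 0" unfolding LIMSEQ_iff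
  proof (intro allI impI)
    fix r :: real assume "r > 0"
    then obtain N where N: "\<forall>n\<ge>N. norm (u n) \<le> (r/2) ^ n"
      using S unfolding small_def by (meson half_gt_zero)
    show "\<exists>no. \<forall>n\<ge>no. norm (norm (u n) powr (1 / real n) - 0) < r"
    proof (intro exI allI impI)
      fix n assume "max N 1 \<le> n"
      then have "norm (u n) powr (1 / real n) \<le> r / 2" using N \<open>r > 0\<close>
        by (intro pow_to_powr) auto
      then show "norm (norm (u n) powr (1 / real n) - 0) < r" using \<open>r > 0\<close> by simp
    qed
  qed
qed

lemma small_le:
  assumes "\<And>n. n \<ge> 1 \<Longrightarrow> norm (u n) \<le> C * norm (v n)" "small v"
  shows "small u"
  unfolding small_def
proof (intro allI impI)
  fix e :: real assume e: "e > 0"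
  define C' where "C' = max C 0 + 1"
  have C': "C' \<ge> 1" "C \<le> C'" unfolding C'_def by auto
  obtain N where N: "\<forall>n\<ge>N. norm (v n) \<le> (e / C') ^ n"
    using assms(2) e C' unfolding small_def by (metis divide_pos_pos less_le_trans zero_less_one)
  show "\<exists>N. \<forall>n\<ge>N. norm (u n) \<le> e ^ n"
  proof (intro exI allI impI)
    fix n assume n: "max N 1 \<le> n"
    have "norm (u n) \<le> C * norm (v n)" using assms(1) n by auto
    also have "\<dots> \<le> C' * norm (v n)" using C' by (intro mult_right_mono) auto
    also have "\<dots> \<le> C' * (e / C') ^ n" using N n C' by (intro mult_left_mono) auto
    also have "\<dots> = e ^ n * (C' / C' ^ n)" by (simp add: power_divide)
    also have "\<dots> \<le> e ^ n * 1"
    proof (intro mult_left_mono)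
      have "C' \<le> C' ^ n" using C' n by (intro self_le_power) auto
      then show "C' / C' ^ n \<le> 1" using C' by (simp add: divide_le_eq_1)
    qed (use e in auto)
    finally show "norm (u n) \<le> e ^ n" by simp
  qed
qed


lemma oc_mult_power: "(oc c * y) ^ n = oc (c ^ n) * (y ^ n :: 'a::cbanach_star_algebra)"
proof (induction n)
  case (Suc n)
  have "(oc c * y) ^ Suc n = oc c * (y * (oc (c ^ n) * y ^ n))"
    by (simp only: power_Suc Suc mult.assoc)
  also have "\<dots> = oc c * (oc (c ^ n) * (y * y ^ n))" by (simp only: oc_lcomm[of y])
  also have "\<dots> = oc (c ^ Suc n) * y ^ Suc n" by (simp only: power_Suc oc_mult mult.assoc)
  finally show ?case .
qed simp

lemma oc_inv: "c \<noteq> 0 \<Longrightarrow> oc c * oc (1 / c) = (1::'a::cbanach_star_algebra)"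
  by (simp flip: oc_mult)

lemma oc_inv': "c \<noteq> 0 \<Longrightarrow> oc (1 / c) * oc c = (1::'a::cbanach_star_algebra)"
  by (simp flip: oc_mult)

lemma neumann:
  fixes u :: "'a::cbanach_star_algebra"
  assumes "\<forall>n\<ge>N. norm (u ^ n) \<le> (1/2) ^ n"
  shows "\<exists>s. s * (1 - u) = 1 \<and> (1 - u) * s = 1"
proof -
  have sm: "summable (\<lambda>n. u ^ n)"
    by (rule summable_comparison_test_ev[where g = "\<lambda>n. (1/2::real)^n"])
       (use assms in \<open>auto simp: eventually_sequentially intro: summable_geometric\<close>)
  have lim: "(\<lambda>n. u ^ n) \<longlonglongrightarrow> 0"
  proof (rule Lim_null_comparison[where g = "\<lambda>n. (1/2::real)^n"])
    show "\<forall>\<^sub>F n in sequentially. norm (u ^ n) \<le> (1 / 2) ^ n"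
      using assms by (auto simp: eventually_sequentially)
    show "(\<lambda>n. (1/2::real) ^ n) \<longlonglongrightarrow> 0" by (rule LIMSEQ_power_zero) simp
  qed
  have tel: "(\<lambda>n. u ^ n - u ^ Suc n) sums (u ^ 0 - 0)"
    by (rule telescope_sums'[OF lim])
  define s where "s = suminf (\<lambda>n. u ^ n)"
  have "(1 - u) * s = (\<Sum>n. (1 - u) * u ^ n)" unfolding s_def by (rule suminf_mult[OF sm, symmetric])
  also have "\<dots> = (\<Sum>n. u ^ n - u ^ Suc n)" by (simp add: algebra_simps)
  also have "\<dots> = 1" using tel sums_unique by fastforce
  finally have 1: "(1 - u) * s = 1" .
  have "s * (1 - u) = (\<Sum>n. u ^ n * (1 - u))" unfolding s_def by (metis suminf_mult2 sm)
  also have "\<dots> = (\<Sum>n. u ^ n - u ^ Suc n)" by (simp add: algebra_simps power_commutes)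
  also have "\<dots> = 1" using tel sums_unique by fastforce
  finally have 2: "s * (1 - u) = 1" .
  show ?thesis using 1 2 by blast
qed

lemma small_imp_spec:
  fixes y :: "'a::cbanach_star_algebra"
  assumes "small (\<lambda>n. y ^ n)"
  shows "spectrum y = {0}"
proof -
  have A: "\<not> invertible_el (scaleC 0 1 - y)"
  proof
    assume "invertible_el (scaleC 0 1 - y)"
    then obtain b where b: "b * (- y) = 1" "(- y) * b = 1"
      unfolding invertible_el_def using oc_0 oc_def by (metis diff_0)
    define c where "c = - b"
    have c: "c * y = 1" "y * c = 1" using b unfolding c_def by simp_all
    have cp: "c ^ n * y ^ n = 1" for n
    proof (induction n)
      case (Suc n)
      have "c ^ Suc n * y ^ Suc n = c ^ n * (c * y) * y ^ n"
        by (simp only: power_Suc2[of c] power_Suc[of y] mult.assoc)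
      then show ?case using Suc c by simp
    qed simp
    define e where "e = 1 / (2 * (norm c + 1))"
    have "0 < 2 * (norm c + 1)" by (smt (verit) norm_ge_zero)
    then have e: "e > 0" unfolding e_def by simp
    obtain N where N: "\<forall>n\<ge>N. norm (y ^ n) \<le> e ^ n"
      using assms e unfolding small_def by blast
    define n where "n = Suc N"
    have yn: "norm (y ^ n) \<le> e ^ n" by (rule N[rule_format]) (simp add: n_def)
    have "1 = norm (c ^ n * y ^ n)" using cp by simp
    also have "\<dots> \<le> norm (c ^ n) * norm (y ^ n)" by (rule norm_mult_ineq)
    also have "\<dots> \<le> norm c ^ n * e ^ n"
      using yn by (intro mult_mono norm_power_ineq) auto
    also have "\<dots> = (norm c * e) ^ n" by (simp add: power_mult_distrib)
    also have "\<dots> < 1"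
    proof -
      have "norm c * e < 1" unfolding e_def using \<open>0 < 2 * (norm c + 1)\<close> by (simp add: field_simps)
      moreover have "0 \<le> norm c * e" using e by simp
      ultimately show ?thesis unfolding n_def by (metis power_less_one_iff zero_less_Suc)
    qed
    finally show False by simp
  qed
  have B: "invertible_el (scaleC l 1 - y)" if l: "l \<noteq> 0" for l
  proof -
    define u where "u = oc (1 / l) * y"
    have lp: "cmod l / 2 > 0" using l by simp
    obtain N where N: "\<forall>n\<ge>N. norm (y ^ n) \<le> (cmod l / 2) ^ n"
      using assms lp unfolding small_def by blast
    have "\<forall>n\<ge>N. norm (u ^ n) \<le> (1/2) ^ n"
    proof (intro allI impI)
      fix n assume "n \<ge> N"
      have "norm (u ^ n) = norm (oc ((1/l) ^ n) * y ^ n :: 'a)"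
        unfolding u_def oc_mult_power ..
      also have "\<dots> \<le> cmod ((1/l)^n) * norm (y ^ n)"
        using norm_mult_ineq norm_oc by metis
      also have "\<dots> \<le> cmod ((1/l)^n) * (cmod l / 2) ^ n"
        using N \<open>n \<ge> N\<close> by (intro mult_left_mono) auto
      also have "\<dots> = (1/2) ^ n"
        using l by (simp add: norm_power norm_divide power_divide)
      finally show "norm (u ^ n) \<le> (1/2) ^ n" .
    qed
    then obtain s where s: "s * (1 - u) = 1" "(1 - u) * s = 1" using neumann by blast
    have "oc l * (1 - u) = oc l - (oc l * oc (1/l)) * y"
      unfolding u_def by (simp add: right_diff_distrib mult.assoc)
    then have eq: "scaleC l 1 - y = oc l * (1 - u)"
      using l by (simp add: oc_inv flip: oc_def)
    show ?thesis unfolding invertible_el_def eq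
    proof (intro exI conjI)
      have "(s * oc (1 / l)) * (oc l * (1 - u)) = s * (oc (1 / l) * oc l) * (1 - u)"
        by (simp only: mult.assoc)
      then show "(s * oc (1 / l)) * (oc l * (1 - u)) = 1"
        using s l by (simp add: oc_inv')
      have "(oc l * (1 - u)) * (s * oc (1 / l)) = oc l * ((1 - u) * s) * oc (1 / l)"
        by (simp only: mult.assoc)
      then show "(oc l * (1 - u)) * (s * oc (1 / l)) = 1"
        using s l by (simp add: oc_inv)
    qed
  qed
  show ?thesis unfolding spectrum_def using A B by auto
qed


lemma half_lem: "0 \<le> (p::real) \<Longrightarrow> 1 / (2 * (p + 1)) * p \<le> 1/2"
  by (simp add: field_simps)

lemma inv_unique: "b * u = 1 \<Longrightarrow> u * c = 1 \<Longrightarrow> b = (c::'a::ring_1)"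
  by (metis mult.assoc mult_1_left mult_1_right)

definition omega :: "nat \<Rightarrow> complex" where
  "omega N = exp (2 * complex_of_real pi * \<i> / of_nat N)"

lemma omega_pow: "N \<ge> 1 \<Longrightarrow> omega N ^ j = exp (2 * complex_of_real pi * \<i> * of_nat j / of_nat N)"
  unfolding omega_def by (simp add: exp_of_nat_mult[symmetric] field_simps)

lemma omega_props:
  assumes "N \<ge> 2"
  shows "omega N ^ N = 1" "\<forall>j. 0 < j \<and> j < N \<longrightarrow> omega N ^ j \<noteq> 1" "cmod (omega N) = 1"
    "omega N \<noteq> 1"
proof -
  have N1: "N \<ge> 1" using assms by simp
  show "omega N ^ N = 1" using omega_pow[OF N1, of N] complex_root_unity_eq_1[OF N1, of N] by simp
  show j: "\<forall>j. 0 < j \<and> j < N \<longrightarrow> omega N ^ j \<noteq> 1"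
    using omega_pow[OF N1] complex_root_unity_eq_1[OF N1] by (auto dest: dvd_imp_le)
  show "cmod (omega N) = 1" unfolding omega_def norm_exp_eq_Re by simp
  show "omega N \<noteq> 1" using j[rule_format, of 1] assms by simp
qed

lemma omega_lim: "omega \<longlonglongrightarrow> 1"
proof -
  have "(\<lambda>N. exp (2 * complex_of_real pi * \<i> * (1 / of_nat N))) \<longlonglongrightarrow> exp (2 * complex_of_real pi * \<i> * 0)"
    by (intro tendsto_intros lim_1_over_n)
  then show ?thesis unfolding omega_def by simp
qed

lemma small_t:
  fixes A t :: "'a::real_normed_algebra_1"
  assumes "A * (1 - t) = 1" "norm (A - 1) \<le> 1/2"
  shows "norm t \<le> 1"
proof -
  have "t = (A - 1) - (A - 1) * t" using assms(1) by (simp add: algebra_simps)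
  then have "norm t \<le> norm (A - 1) + norm (A - 1) * norm t"
    by (metis norm_mult_ineq norm_triangle_ineq4 order_trans add_left_mono)
  also have "\<dots> \<le> 1/2 + 1/2 * norm t" using assms(2) by (intro add_mono mult_right_mono) auto
  finally show ?thesis by simp
qed

locale qn_ctx =
  fixes y :: "'a::cbanach_star_algebra"
  assumes H: "\<And>l. l \<noteq> 0 \<Longrightarrow> invertible_el (oc l - y)"
begin

lemma inv_ex: "\<exists>b. b * (1 - oc z * y) = 1 \<and> (1 - oc z * y) * b = 1"
proof (cases "z = 0")
  case True then show ?thesis by (intro exI[of _ 1]) simp
next
  case False
  then obtain b0 where b0: "b0 * (oc (1/z) - y) = 1" "(oc (1/z) - y) * b0 = 1"
    using H[of "1/z"] unfolding invertible_el_def by auto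
  have "oc z * (oc (1/z) - y) = (oc z * oc (1/z)) - oc z * y"
    by (simp add: right_diff_distrib mult.assoc)
  then have eq: "1 - oc z * y = oc z * (oc (1/z) - y)" using False by (simp add: oc_inv)
  show ?thesis unfolding eq
  proof (intro exI conjI)
    have "(b0 * oc (1 / z)) * (oc z * (oc (1/z) - y)) = b0 * (oc (1 / z) * oc z) * (oc (1/z) - y)"
      by (simp only: mult.assoc)
    then show "(b0 * oc (1 / z)) * (oc z * (oc (1/z) - y)) = 1"
      using b0 False by (simp add: oc_inv')
    have "(oc z * (oc (1/z) - y)) * (b0 * oc (1 / z)) = oc z * ((oc (1/z) - y) * b0) * oc (1 / z)"
      by (simp only: mult.assoc)
    then show "(oc z * (oc (1/z) - y)) * (b0 * oc (1 / z)) = 1"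
      using b0 False by (simp add: oc_inv)
  qed
qed

definition f :: "complex \<Rightarrow> 'a" where
  "f z = (SOME b. b * (1 - oc z * y) = 1 \<and> (1 - oc z * y) * b = 1)"

lemma f_l: "f z * (1 - oc z * y) = 1" and f_r: "(1 - oc z * y) * f z = 1"
  using someI_ex[OF inv_ex[of z]] unfolding f_def by auto

lemma resolvent: "f a - f b = oc (a - b) * (f a * y * f b)"
proof -
  have 1: "f a * (1 - oc b * y) * f b = f a" using f_r[of b] by (simp add: mult.assoc)
  have 2: "f a * (1 - oc a * y) * f b = f b" using f_l[of a] by simp
  have "f a - f b = f a * (1 - oc b * y) * f b - f a * (1 - oc a * y) * f b"
    by (simp only: 1 2)
  also have "\<dots> = f a * ((1 - oc b * y) - (1 - oc a * y)) * f b"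
    by (simp only: left_diff_distrib right_diff_distrib)
  also have "(1 - oc b * y) - (1 - oc a * y) = oc (a - b) * y"
    by (simp add: oc_diff left_diff_distrib)
  also have "f a * (oc (a - b) * y) * f b = oc (a - b) * (f a * y * f b)"
    by (simp only: oc_lcomm[of "f a"] mult.assoc)
  finally show ?thesis .
qed

lemma norm_resolvent: "norm (f a - f b) \<le> cmod (a - b) * (norm (f a) * norm y * norm (f b))"
proof -
  have "norm (f a - f b) \<le> norm (oc (a - b) :: 'a) * norm (f a * y * f b)"
    unfolding resolvent by (rule norm_mult_ineq)
  also have "\<dots> \<le> cmod (a - b) * (norm (f a) * norm y * norm (f b))"
    unfolding norm_oc
    by (intro mult_left_mono order_trans[OF norm_mult_ineq] mult_right_mono norm_mult_ineq) auto
  finally show ?thesis .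
qed

lemma f_local:
  assumes "cmod (x - z) * norm y * norm (f z) \<le> 1/2"
  shows "norm (f x) \<le> 2 * norm (f z)"
    and "norm (f x - f z) \<le> 2 * norm y * norm (f z)^2 * cmod (x - z)"
proof -
  have r: "norm (f x - f z) \<le> (cmod (x - z) * norm y * norm (f z)) * norm (f x)"
    using norm_resolvent[of x z] by (simp add: mult_ac)
  also have "\<dots> \<le> 1/2 * norm (f x)" using assms by (intro mult_right_mono) auto
  finally have "norm (f x - f z) \<le> 1/2 * norm (f x)" .
  moreover have "norm (f x) \<le> norm (f z) + norm (f x - f z)"
    by (metis add.commute diff_add_cancel norm_triangle_ineq)
  ultimately show fx: "norm (f x) \<le> 2 * norm (f z)" by linarith
  have "norm (f x - f z) \<le> (cmod (x - z) * norm y * norm (f z)) * (2 * norm (f z))"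
    using r fx by (meson mult_left_mono norm_ge_zero order_trans zero_le_mult_iff)
  then show "norm (f x - f z) \<le> 2 * norm y * norm (f z)^2 * cmod (x - z)"
    by (simp add: power2_eq_square mult_ac)
qed

lemma f_cont: "isCont f z"
proof -
  define C where "C = 2 * norm y * norm (f z)^2"
  define d where "d = 1 / (2 * (norm y * norm (f z) + 1))"
  have dpos: "d > 0" unfolding d_def by (smt (verit) divide_pos_pos mult_nonneg_nonneg norm_ge_zero)
  have ev: "\<forall>\<^sub>F x in at z. norm (f x - f z) \<le> C * cmod (x - z)"
    unfolding eventually_at
  proof (intro exI[of _ d] conjI dpos ballI impI)
    fix x assume "x \<in> UNIV" "x \<noteq> z \<and> dist x z < d"
    then have xd: "cmod (x - z) \<le> d" by (simp add: dist_norm)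
    have "cmod (x - z) * norm y * norm (f z) \<le> d * (norm y * norm (f z))"
      using xd by (simp add: mult.assoc mult_right_mono)
    also have "\<dots> \<le> 1/2" unfolding d_def by (rule half_lem) simp
    finally show "norm (f x - f z) \<le> C * cmod (x - z)"
      unfolding C_def by (rule f_local(2))
  qed
  have "((\<lambda>x. f x - f z) \<longlongrightarrow> 0) (at z)"
  proof (rule Lim_null_comparison[OF ev])
    have "((\<lambda>x. C * cmod (x - z)) \<longlongrightarrow> C * cmod (z - z)) (at z)"
      by (intro tendsto_intros)
    then show "((\<lambda>x. C * cmod (x - z)) \<longlongrightarrow> 0) (at z)" by simp
  qed
  then show ?thesis unfolding isCont_def by (simp add: LIM_zero_iff)
qed

lemma f_bounded: "\<exists>M>0. \<forall>z. cmod z \<le> r \<longrightarrow> norm (f z) \<le> M"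
proof -
  have "continuous_on (cball 0 r) f"
    by (intro continuous_at_imp_continuous_on ballI f_cont)
  then have "compact (f ` cball 0 r)" by (intro compact_continuous_image) auto
  then have "bounded (f ` cball 0 r)" by (rule compact_imp_bounded)
  then obtain M where "M > 0" "\<forall>x\<in>f ` cball 0 r. norm x \<le> M" unfolding bounded_pos by auto
  then show ?thesis by (intro exI[of _ M]) auto
qed


definition S :: "nat \<Rightarrow> complex \<Rightarrow> complex \<Rightarrow> 'a" where
  "S N w z = (\<Sum>k<N. f (w ^ k * z))"

lemma one_diff_power_eq_nc: "1 - x ^ n = (1 - x) * (\<Sum>j<n. x ^ j :: 'b::ring_1)"
  by (induction n) (simp_all add: algebra_simps)

lemma geom_zero: "x ^ N = 1 \<Longrightarrow> x \<noteq> 1 \<Longrightarrow> (\<Sum>k<N. x ^ k) = (0::complex)"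
  using one_diff_power_eq[of x N] by simp

lemma S_inv:
  assumes w: "w ^ N = 1" "\<forall>j. 0 < j \<and> j < N \<longrightarrow> w ^ j \<noteq> 1" and N: "N \<ge> 1"
  shows "S N w z * (1 - oc (z ^ N) * y ^ N) = of_nat N"
proof -
  have tm: "f (w ^ k * z) * (1 - oc (z ^ N) * y ^ N) = (\<Sum>j<N. oc ((w ^ k * z) ^ j) * y ^ j)" for k
  proof -
    define s where "s = oc (w ^ k * z) * y"
    have "(w ^ k * z) ^ N = z ^ N"
      using w(1) by (simp add: power_mult_distrib flip: power_mult) (simp add: mult.commute power_mult)
    then have sN: "s ^ N = oc (z ^ N) * y ^ N" unfolding s_def oc_mult_power by simp
    have "f (w ^ k * z) * (1 - s ^ N) = (f (w ^ k * z) * (1 - s)) * (\<Sum>j<N. s ^ j)"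
      by (simp only: one_diff_power_eq_nc mult.assoc)
    also have "\<dots> = (\<Sum>j<N. s ^ j)" unfolding s_def f_l by simp
    finally have ch: "f (w ^ k * z) * (1 - s ^ N) = (\<Sum>j<N. s ^ j)" .
    have "(\<Sum>j<N. s ^ j) = (\<Sum>j<N. oc ((w ^ k * z) ^ j) * y ^ j)" unfolding s_def oc_mult_power ..
    then show ?thesis unfolding sN[symmetric] using ch by simp
  qed
  have "S N w z * (1 - oc (z ^ N) * y ^ N) = (\<Sum>k<N. \<Sum>j<N. oc ((w ^ k * z) ^ j) * y ^ j)"
    unfolding S_def sum_distrib_right tm ..
  also have "\<dots> = (\<Sum>j<N. \<Sum>k<N. oc ((w ^ k * z) ^ j) * y ^ j)" by (rule sum.swap)
  also have "\<dots> = (\<Sum>j<N. oc (z ^ j * (\<Sum>k<N. (w ^ j) ^ k)) * y ^ j)"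
    by (simp add: sum_distrib_right oc_sum sum_distrib_left power_mult_distrib mult.commute
        flip: power_mult)
  also have "\<dots> = (\<Sum>j<N. if j = 0 then of_nat N else 0)"
  proof (intro sum.cong refl)
    fix j assume "j \<in> {..<N}"
    show "oc (z ^ j * (\<Sum>k<N. (w ^ j) ^ k)) * y ^ j = (if j = 0 then of_nat N else 0)"
    proof (cases "j = 0")
      case True then show ?thesis by (simp add: oc_of_nat)
    next
      case False
      have "(w ^ j) ^ N = 1" using w(1) by (metis mult.commute power_mult power_one)
      moreover have "w ^ j \<noteq> 1" using w(2) False \<open>j \<in> {..<N}\<close> by auto
      ultimately show ?thesis using False by (simp add: geom_zero)
    qed
  qed
  also have "\<dots> = of_nat N" using N by (simp add: sum.delta)
  finally show ?thesis .
qed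

lemma norm_oc_mult: "norm (oc a * x) = cmod a * norm x"
  by (simp flip: scaleC_oc add: norm_scaleC)

lemma norm_mult3: "norm (p * q * (r::'a)) \<le> norm p * norm q * norm r"
  by (meson mult_right_mono norm_ge_zero norm_mult_ineq order_trans)

lemma S_diff:
  assumes w: "w ^ N = 1" "w \<noteq> 1" "cmod w = 1"
      and z: "z \<noteq> 0" "cmod z \<le> r" "cmod u \<le> r"
      and M: "\<forall>x. cmod x \<le> r \<longrightarrow> norm (f x) \<le> M"
  shows "norm (S N w z - S N w u) \<le> of_nat N * (cmod (z - u) * (M^3 * norm y ^ 2 * cmod (u - w * z)))"
proof -
  have cm: "cmod (w ^ k * x) = cmod x" for k x using w(3) by (simp add: norm_mult norm_power)
  have Mk: "norm (f (w ^ k * x)) \<le> M" if "cmod x \<le> r" for k x using M cm that by metis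
  have M0: "0 \<le> M" using Mk[of z 0] z by (meson norm_ge_zero order_trans)
  define T where "T = (\<Sum>k<N. oc (w ^ k * z) * (f (w ^ k * z) * y * f (w ^ Suc k * z)))"
  have "oc (1 - w) * T = (\<Sum>k<N. oc ((1 - w) * (w ^ k * z)) * (f (w ^ k * z) * y * f (w ^ Suc k * z)))"
    unfolding T_def by (simp add: sum_distrib_left oc_mult mult.assoc)
  also have "\<dots> = (\<Sum>k<N. f (w ^ k * z) - f (w ^ Suc k * z))"
  proof (intro sum.cong refl)
    fix k
    have "(1 - w) * (w ^ k * z) = w ^ k * z - w ^ Suc k * z" by (simp add: algebra_simps)
    then show "oc ((1 - w) * (w ^ k * z)) * (f (w ^ k * z) * y * f (w ^ Suc k * z)) =
      f (w ^ k * z) - f (w ^ Suc k * z)" by (simp add: resolvent)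
  qed
  also have "\<dots> = f (w ^ 0 * z) - f (w ^ N * z)"
    by (rule sum_lessThan_telescope'[of "\<lambda>k. f (w ^ k * z)"])
  also have "\<dots> = 0" using w(1) by simp
  finally have "oc (1 - w) * T = 0" .
  then have "oc (1 / (1 - w)) * (oc (1 - w) * T) = 0" by simp
  then have T0: "T = 0" using w(2) by (simp add: mult.assoc[symmetric] oc_inv')
  define P where "P k = oc (w ^ k * z) * (f (w ^ k * z) * y * (oc (w ^ k * u - w ^ Suc k * z) *
     (f (w ^ k * u) * y * f (w ^ Suc k * z))))" for k
  have "oc z * (S N w z - S N w u) = (\<Sum>k<N. oc z * (f (w ^ k * z) - f (w ^ k * u)))"
    unfolding S_def sum_subtractf[symmetric] sum_distrib_left ..
  also have "\<dots> = (\<Sum>k<N. oc (z - u) * (oc (w ^ k * z) * (f (w ^ k * z) * y * f (w ^ k * u))))"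
  proof (intro sum.cong refl)
    fix k
    have "z * (w ^ k * z - w ^ k * u) = (z - u) * (w ^ k * z)" by (simp add: algebra_simps)
    then have "oc z * oc (w ^ k * z - w ^ k * u) = (oc (z - u) * oc (w ^ k * z) :: 'a)"
      by (simp only: oc_mult[symmetric])
    then show "oc z * (f (w ^ k * z) - f (w ^ k * u)) =
        oc (z - u) * (oc (w ^ k * z) * (f (w ^ k * z) * y * f (w ^ k * u)))"
      by (simp add: resolvent mult.assoc[symmetric])
  qed
  also have "\<dots> = oc (z - u) * ((\<Sum>k<N. oc (w ^ k * z) * (f (w ^ k * z) * y * f (w ^ k * u))) - T)"
    by (simp add: T0 sum_distrib_left)
  also have "\<dots> = oc (z - u) * (\<Sum>k<N. P k)"
  proof -
    have "(\<Sum>k<N. oc (w ^ k * z) * (f (w ^ k * z) * y * f (w ^ k * u))) - T = (\<Sum>k<N. P k)"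
      unfolding T_def P_def sum_subtractf[symmetric]
    proof (intro sum.cong refl)
      fix k
      show "oc (w ^ k * z) * (f (w ^ k * z) * y * f (w ^ k * u)) -
          oc (w ^ k * z) * (f (w ^ k * z) * y * f (w ^ Suc k * z)) =
          oc (w ^ k * z) * (f (w ^ k * z) * y * (oc (w ^ k * u - w ^ Suc k * z) *
          (f (w ^ k * u) * y * f (w ^ Suc k * z))))"
        unfolding resolvent[of "w ^ k * u" "w ^ Suc k * z", symmetric]
        by (simp only: right_diff_distrib)
    qed
    then show ?thesis by simp
  qed
  finally have eq: "oc z * (S N w z - S N w u) = oc (z - u) * (\<Sum>k<N. P k)" .
  have Pb: "norm (P k) \<le> cmod z * (M * norm y * (cmod (u - w * z) * (M * norm y * M)))" for k
  proof -
    have c1: "cmod (w ^ k * u - w ^ Suc k * z) = cmod (u - w * z)"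
      using cm[of k "u - w * z"] by (simp add: algebra_simps)
    have "norm (P k) = cmod z * norm (f (w ^ k * z) * y * (oc (w ^ k * u - w ^ Suc k * z) *
     (f (w ^ k * u) * y * f (w ^ Suc k * z))))" unfolding P_def norm_oc_mult cm ..
    also have "\<dots> \<le> cmod z * (norm (f (w ^ k * z)) * norm y * (cmod (u - w * z) *
       (norm (f (w ^ k * u)) * norm y * norm (f (w ^ Suc k * z)))))"
    proof (rule mult_left_mono[OF order_trans[OF norm_mult3]])
      show "norm (f (w ^ k * z)) * norm y * norm (oc (w ^ k * u - w ^ Suc k * z) *
         (f (w ^ k * u) * y * f (w ^ Suc k * z)))
    \<le> norm (f (w ^ k * z)) * norm y * (cmod (u - w * z) *
       (norm (f (w ^ k * u)) * norm y * norm (f (w ^ Suc k * z))))"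
        unfolding norm_oc_mult c1 by (intro mult_left_mono norm_mult3) auto
    qed simp
    also have "\<dots> \<le> cmod z * (M * norm y * (cmod (u - w * z) * (M * norm y * M)))"
      using Mk[of z k] Mk[of u k] Mk[of z "Suc k"] z M0
      by (intro mult_left_mono mult_mono mult_right_mono) auto
    finally show ?thesis .
  qed
  have "cmod z * norm (S N w z - S N w u) = norm (oc z * (S N w z - S N w u))"
    by (simp add: norm_oc_mult)
  also have "\<dots> \<le> cmod (z - u) * (\<Sum>k<N. norm (P k))"
    unfolding eq norm_oc_mult by (intro mult_left_mono norm_sum) auto
  also have "\<dots> \<le> cmod (z - u) * (\<Sum>k<N. cmod z * (M * norm y * (cmod (u - w * z) * (M * norm y * M))))"
    by (intro mult_left_mono sum_mono Pb) auto
  also have "\<dots> = cmod z * (of_nat N * (cmod (z - u) * (M^3 * norm y ^ 2 * cmod (u - w * z))))"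
    by (simp add: power2_eq_square power3_eq_cube mult_ac)
  finally show ?thesis using z(1) by simp
qed


definition Av :: "nat \<Rightarrow> complex \<Rightarrow> complex \<Rightarrow> 'a" where
  "Av N w z = oc (1 / of_nat N) * S N w z"

lemma Av_inv:
  assumes "w ^ N = 1" "\<forall>j. 0 < j \<and> j < N \<longrightarrow> w ^ j \<noteq> 1" "N \<ge> 1"
  shows "Av N w z * (1 - oc (z ^ N) * y ^ N) = 1"
proof -
  have "Av N w z * (1 - oc (z ^ N) * y ^ N) = oc (1 / of_nat N) * of_nat N"
    unfolding Av_def mult.assoc S_inv[OF assms] ..
  also have "\<dots> = 1" using assms(3) by (simp flip: oc_of_nat oc_mult)
  finally show ?thesis .
qed

lemma Av_bound:
  assumes "cmod w = 1" "cmod z \<le> r" "N \<ge> 1" "\<forall>x. cmod x \<le> r \<longrightarrow> norm (f x) \<le> M"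
  shows "norm (Av N w z) \<le> M"
proof -
  have "norm (S N w z) \<le> (\<Sum>k<N. norm (f (w ^ k * z)))" unfolding S_def by (rule norm_sum)
  also have "\<dots> \<le> (\<Sum>k<N. M)"
    using assms(1,2,4) by (intro sum_mono) (simp add: norm_mult norm_power)
  finally have "norm (S N w z) \<le> of_nat N * M" by simp
  then show ?thesis using assms(3) unfolding Av_def norm_oc_mult
    by (simp add: norm_divide field_simps)
qed

lemma Av_diff:
  assumes w: "w ^ N = 1" "w \<noteq> 1" "cmod w = 1" "N \<ge> 1"
      and z: "z \<noteq> 0" "cmod z \<le> r" "cmod u \<le> r"
      and M: "\<forall>x. cmod x \<le> r \<longrightarrow> norm (f x) \<le> M"
  shows "norm (Av N w z - Av N w u) \<le> cmod (z - u) * (M^3 * norm y ^ 2 * cmod (u - w * z))"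
proof -
  have "Av N w z - Av N w u = oc (1 / of_nat N) * (S N w z - S N w u)"
    unfolding Av_def by (simp add: right_diff_distrib)
  then have "norm (Av N w z - Av N w u) = norm (S N w z - S N w u) / of_nat N"
    by (simp add: norm_oc_mult norm_divide)
  also have "\<dots> \<le> of_nat N * (cmod (z - u) * (M^3 * norm y ^ 2 * cmod (u - w * z))) / of_nat N"
    by (intro divide_right_mono S_diff[OF w(1-3) z M]) auto
  also have "\<dots> = cmod (z - u) * (M^3 * norm y ^ 2 * cmod (u - w * z))" using w(4) by simp
  finally show ?thesis .
qed


theorem small_pow: "small (\<lambda>n. y ^ n)"
  unfolding small_def
proof (intro allI impI)
  fix e :: real assume e: "e > 0"
  define r where "r = 1 / e"
  have r: "r > 0" unfolding r_def using e by simp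
  obtain M where M: "M > 0" "\<forall>x. cmod x \<le> r \<longrightarrow> norm (f x) \<le> M" using f_bounded by blast
  define Y where "Y = norm y"
  have Y0: "Y \<ge> 0" unfolding Y_def by simp
  define K where "K = M^3 * Y^2"
  have K0: "K \<ge> 0" unfolding K_def using M by simp
  define \<rho> where "\<rho> = min (r/2) (1 / (2 * (Y + 1)))"
  have \<rho>: "0 < \<rho>" "\<rho> < r" using r Y0 unfolding \<rho>_def by auto
  have \<rho>Y: "\<rho> * Y \<le> 1/2"
  proof -
    have "\<rho> * Y \<le> (1 / (2 * (Y + 1))) * Y" unfolding \<rho>_def using Y0 by (intro mult_right_mono) auto
    also have "\<dots> \<le> 1/2" using Y0 by (simp add: field_simps)
    finally show ?thesis .
  qed
  define J :: nat where "J = nat \<lceil>8 * r^2 * K\<rceil> + 1"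
  have J: "J \<ge> 1" "real J \<ge> 8 * r^2 * K" unfolding J_def
    by (auto intro: order_trans[OF real_nat_ceiling_ge])
  define d where "d = (r - \<rho>) / real J"
  have d0: "d > 0" unfolding d_def using J \<rho> by simp
  have dK: "r * K * d \<le> 1/8"
  proof -
    have "r * K * d \<le> r * K * (r / real J)" unfolding d_def using \<rho> r K0 J
      by (intro mult_left_mono divide_right_mono) auto
    also have "\<dots> = (r^2 * K) / real J" by (simp add: power2_eq_square)
    also have "\<dots> \<le> 1/8" using J by (simp add: divide_le_eq)
    finally show ?thesis .
  qed
  have ev1: "\<forall>\<^sub>F N in sequentially. r * K * r * cmod (1 - omega N) < 1/8"
  proof (rule order_tendstoD(2))
    have "(\<lambda>N. r * K * r * cmod (1 - omega N)) \<longlonglongrightarrow> r * K * r * cmod (1 - 1)"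
      by (intro tendsto_intros omega_lim)
    then show "(\<lambda>N. r * K * r * cmod (1 - omega N)) \<longlonglongrightarrow> 0" by simp
  qed simp
  have ev2: "\<forall>\<^sub>F N in sequentially. M * (1/2)^N < 1/4"
  proof (rule order_tendstoD(2))
    have "(\<lambda>N. M * (1/2::real)^N) \<longlonglongrightarrow> M * 0"
      by (intro tendsto_intros LIMSEQ_power_zero) simp
    then show "(\<lambda>N. M * (1/2::real)^N) \<longlonglongrightarrow> 0" by simp
  qed simp
  obtain N0 where N0: "\<forall>N\<ge>N0. r * K * r * cmod (1 - omega N) < 1/8 \<and> M * (1/2)^N < 1/4"
    using eventually_conj[OF ev1 ev2] unfolding eventually_sequentially by blast
  show "\<exists>N. \<forall>n\<ge>N. norm (y ^ n) \<le> e ^ n"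
  proof (intro exI allI impI)
    fix N assume NN: "max N0 2 \<le> N"
    then have N2: "N \<ge> 2" and c1: "r * K * r * cmod (1 - omega N) \<le> 1/8"
      and c2: "M * (1/2)^N \<le> 1/4" using N0 by auto
    have N1: "N \<ge> 1" using N2 by simp
    define w where "w = omega N"
    note wp = omega_props[OF N2, folded w_def]
    define lam where "lam j = complex_of_real (\<rho> + real j * d)" for j
    have lamJ: "lam J = complex_of_real r" unfolding lam_def d_def using J by simp
    have lam_pos: "lam j \<noteq> 0" for j
    proof -
      have "\<rho> + real j * d > 0" using \<rho> d0 by (simp add: add_pos_nonneg)
      then show ?thesis unfolding lam_def by (metis of_real_eq_0_iff order_less_irrefl)
    qed
    have lam_le: "cmod (lam j) \<le> r" if "j \<le> J" for j
    proof -
      have "\<rho> + real j * d > 0" using \<rho> d0 by (simp add: add_pos_nonneg)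
      moreover have "\<rho> + real j * d \<le> \<rho> + real J * d" using that d0 by (simp add: mult_right_mono)
      moreover have "\<rho> + real J * d = r" unfolding d_def using J by simp
      ultimately show ?thesis unfolding lam_def norm_of_real by linarith
    qed
    have step: "norm (Av N w (lam j) - Av N w (lam (Suc j))) \<le> d * (K * (d + r * cmod (1 - w)))"
      if "j < J" for j
    proof -
      have l1: "cmod (lam j) \<le> r" using that by (intro lam_le) simp
      have l2: "cmod (lam (Suc j)) \<le> r" using that by (intro lam_le) simp
      have a: "norm (Av N w (lam j) - Av N w (lam (Suc j)))
          \<le> cmod (lam j - lam (Suc j)) * (K * cmod (lam (Suc j) - w * lam j))"
        using Av_diff[OF wp(1) wp(4) wp(3) N1 lam_pos[of j] l1 l2 M(2)]
        unfolding K_def Y_def .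
      have "lam j - lam (Suc j) = complex_of_real (- d)" unfolding lam_def
        by (simp add: algebra_simps)
      then have b: "cmod (lam j - lam (Suc j)) = d" using d0 by simp
      have e1: "lam j - w * lam j = lam j * (1 - w)" by (simp add: algebra_simps)
      have e2: "cmod (lam j * (1 - w)) \<le> r * cmod (1 - w)"
        unfolding norm_mult using lam_le[of j] that by (intro mult_right_mono) auto
      have e3: "cmod (lam (Suc j) - lam j) = d" using b by (simp add: norm_minus_commute)
      have "cmod (lam (Suc j) - w * lam j) \<le> cmod (lam (Suc j) - lam j) + cmod (lam j - w * lam j)"
        by (rule norm_diff_triangle_le[of _ "lam j"]) simp_all
      then have c: "cmod (lam (Suc j) - w * lam j) \<le> d + r * cmod (1 - w)"
        using e1 e2 e3 by simp
      have "K * cmod (lam (Suc j) - w * lam j) \<le> K * (d + r * cmod (1 - w))"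
        using c K0 by (rule mult_left_mono)
      then have "d * (K * cmod (lam (Suc j) - w * lam j)) \<le> d * (K * (d + r * cmod (1 - w)))"
        using d0 by (simp add: mult_left_mono)
      then show ?thesis using a unfolding b by linarith
    qed
    have "Av N w (lam 0) - Av N w (lam J) = (\<Sum>j<J. Av N w (lam j) - Av N w (lam (Suc j)))"
      by (rule sum_lessThan_telescope'[symmetric])
    then have "norm (Av N w (lam 0) - Av N w (lam J)) \<le> (\<Sum>j<J. norm (Av N w (lam j) - Av N w (lam (Suc j))))"
      by (simp add: norm_sum)
    also have "\<dots> \<le> (\<Sum>j<J. d * (K * (d + r * cmod (1 - w))))" by (intro sum_mono step) auto
    also have "\<dots> = (real J * d) * (K * (d + r * cmod (1 - w)))" by simp
    also have "real J * d = r - \<rho>" unfolding d_def using J by simp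
    also have "(r - \<rho>) * (K * (d + r * cmod (1 - w))) \<le> r * (K * (d + r * cmod (1 - w)))"
      using \<rho> K0 d0 by (intro mult_right_mono) auto
    also have "\<dots> = r * K * d + r * K * r * cmod (1 - w)" by (simp add: algebra_simps)
    also have "\<dots> \<le> 1/4" using dK c1 unfolding w_def by simp
    finally have D: "norm (Av N w (lam 0) - Av N w (lam J)) \<le> 1/4" .
    have A0: "norm (Av N w (lam 0) - 1) \<le> 1/4"
    proof -
      define t where "t = oc (lam 0 ^ N) * y ^ N"
      have inv: "Av N w (lam 0) * (1 - t) = 1" unfolding t_def by (rule Av_inv[OF wp(1,2) N1])
      then have "Av N w (lam 0) - 1 = Av N w (lam 0) * t" by (simp add: algebra_simps)
      then have "norm (Av N w (lam 0) - 1) \<le> norm (Av N w (lam 0)) * norm t"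
        by (simp add: norm_mult_ineq)
      also have "\<dots> \<le> M * (1/2)^N"
      proof (intro mult_mono)
        show "norm (Av N w (lam 0)) \<le> M" by (rule Av_bound[OF wp(3) lam_le N1 M(2)]) simp
        have "norm t = \<rho> ^ N * norm (y ^ N)" unfolding t_def norm_oc_mult lam_def
          using \<rho> by (simp add: norm_power)
        also have "\<dots> \<le> \<rho> ^ N * Y ^ N" unfolding Y_def using \<rho>
          by (intro mult_left_mono norm_power_ineq) auto
        also have "\<dots> = (\<rho> * Y) ^ N" by (simp add: power_mult_distrib)
        also have "\<dots> \<le> (1/2) ^ N" using \<rho>Y \<rho> Y0 by (intro power_mono) auto
        finally show "norm t \<le> (1/2)^N" .
      qed (use M in auto)
      also have "\<dots> \<le> 1/4" by (rule c2)
      finally show ?thesis .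
    qed
    have "Av N w (lam J) - 1 = (Av N w (lam 0) - 1) - (Av N w (lam 0) - Av N w (lam J))"
      by simp
    then have "norm (Av N w (lam J) - 1) \<le> norm (Av N w (lam 0) - 1) + norm (Av N w (lam 0) - Av N w (lam J))"
      by (metis norm_triangle_ineq4)
    also have "\<dots> \<le> 1/2" using A0 D by simp
    finally have "norm (Av N w (lam J) - 1) \<le> 1/2" .
    moreover have "Av N w (lam J) * (1 - oc (lam J ^ N) * y ^ N) = 1" by (rule Av_inv[OF wp(1,2) N1])
    ultimately have "norm (oc (lam J ^ N) * y ^ N) \<le> 1" using small_t by blast
    then have "r ^ N * norm (y ^ N) \<le> 1" unfolding norm_oc_mult lamJ using r
      by (simp add: norm_power)
    then have "norm (y ^ N) \<le> 1 / r ^ N" using r by (simp add: field_simps)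
    then show "norm (y ^ N) \<le> e ^ N" unfolding r_def using e by (simp add: power_one_over)
  qed
qed

end


lemma spec_imp_small:
  fixes y :: "'a::cbanach_star_algebra"
  assumes "spectrum y = {0}"
  shows "small (\<lambda>n. y ^ n)"
proof -
  have "qn_ctx y"
  proof
    fix l :: complex assume "l \<noteq> 0"
    then have "l \<notin> spectrum y" using assms by simp
    then show "invertible_el (oc l - y)" unfolding spectrum_def oc_def by simp
  qed
  then show ?thesis by (rule qn_ctx.small_pow)
qed

lemma qnil_iff: "(y::'a::cbanach_star_algebra) \<in> qnil \<longleftrightarrow> small (\<lambda>n. y ^ n)"
  unfolding qnil_def using spec_imp_small small_imp_spec by blast

lemma part3:
  fixes a z y c :: "'a::cbanach_star_algebra"
  assumes a: "a = z + y" and yz: "y * z = 0" and yq: "y \<in> qnil" and core: "is_core_inv z c"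
  shows "is_gcoreEP_inv a c"
proof -
  have c1: "z * c^2 = c" and c2: "adj (z * c) = z * c" and c3: "c * z^2 = z"
    using core unfolding is_core_inv_def by auto
  have yc: "y * c = 0"
  proof -
    have "y * c = (y * z) * c^2" using c1 by (simp add: mult.assoc)
    then show ?thesis using yz by simp
  qed
  have ac2: "a * c^2 = c"
  proof -
    have "a * c^2 = z * c^2 + (y * c) * c" by (simp add: a distrib_right power2_eq_square mult.assoc)
    then show ?thesis using c1 yc by simp
  qed
  have ac: "a * c = z * c" using yc by (simp add: a distrib_right)
  have yz': "y ^ Suc n * z = 0" for n
    by (simp only: power_Suc2 mult.assoc yz mult_zero_right)
  have en: "a ^ n - c * a ^ Suc n = (1 - c * z) * y ^ n - c * y ^ Suc n" for n
  proof (induction n)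
    case 0
    show ?case by (simp add: a algebra_simps)
  next
    case (Suc n)
    have "a ^ Suc n - c * a ^ Suc (Suc n) = (a ^ n - c * a ^ Suc n) * a"
      by (simp only: left_diff_distrib mult.assoc power_Suc2[symmetric])
    also have "\<dots> = ((1 - c * z) * y ^ n - c * y ^ Suc n) * (z + y)" using Suc a by simp
    also have "\<dots> = (1 - c * z) * (y ^ n * z) - c * (y ^ Suc n * z) + (1 - c * z) * y ^ Suc n
        - c * y ^ Suc (Suc n)"
      by (simp add: algebra_simps power_commutes)
    also have "(1 - c * z) * (y ^ n * z) = 0"
    proof (cases n)
      case 0
      have "(1 - c * z) * z = z - c * z^2" by (simp add: algebra_simps power2_eq_square mult.assoc)
      then show ?thesis using 0 c3 by simp
    next
      case (Suc m) then show ?thesis using yz' by simp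
    qed
    finally show ?case using yz' by simp
  qed
  have sy: "small (\<lambda>n. y ^ n)" using yq qnil_iff by blast
  have "small (\<lambda>n. a ^ n - c * a ^ (n + 1))"
  proof (rule small_le[OF _ sy])
    fix n :: nat
    have "norm (a ^ n - c * a ^ (n + 1)) = norm ((1 - c * z) * y ^ n - c * (y * y ^ n))"
      using en[of n] by simp
    also have "\<dots> \<le> norm ((1 - c * z) * y ^ n) + norm (c * (y * y ^ n))" by (rule norm_triangle_ineq4)
    also have "\<dots> \<le> norm (1 - c * z) * norm (y ^ n) + norm c * (norm y * norm (y ^ n))"
      by (intro add_mono order_trans[OF norm_mult_ineq] mult_left_mono norm_mult_ineq) auto
    also have "\<dots> = (norm (1 - c * z) + norm c * norm y) * norm (y ^ n)" by (simp add: algebra_simps)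
    finally show "norm (a ^ n - c * a ^ (n + 1)) \<le> (norm (1 - c * z) + norm c * norm y) * norm (y ^ n)" .
  qed
  then show ?thesis unfolding is_gcoreEP_inv_def small_iff[symmetric] using ac2 ac c2 by simp
qed

lemma part1:
  fixes a x :: "'a::cbanach_star_algebra"
  assumes g: "is_gcoreEP_inv a x"
  shows "\<exists>z y. a = z + y \<and> adj z * y = 0 \<and> y * z = 0 \<and> (\<exists>c. is_core_inv z c) \<and> y \<in> qnil"
proof -
  have ax2: "a * (x * x) = x" and adjax: "adj (a * x) = a * x"
    and se: "small (\<lambda>n. a ^ n - x * a ^ (n + 1))"
    using g unfolding is_gcoreEP_inv_def small_iff power2_eq_square by auto
  have L1: "a * x ^ Suc (Suc m) = x ^ Suc m" for m
  proof -
    have "a * x ^ Suc (Suc m) = (a * (x * x)) * x ^ m" by (simp only: power_Suc mult.assoc)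
    then show ?thesis using ax2 by simp
  qed
  have L2: "a ^ Suc m * x ^ Suc m = a * x" for m
  proof (induction m)
    case (Suc m)
    have "a ^ Suc (Suc m) * x ^ Suc (Suc m) = a ^ Suc m * (a * x ^ Suc (Suc m))"
      by (simp only: power_Suc2[of a "Suc m"] mult.assoc)
    then show ?case using L1 Suc by simp
  qed simp
  have L3: "(a ^ Suc m - x * a ^ (Suc m + 1)) * x ^ Suc m = a * x - x * a * a * x" for m
  proof -
    have "(a ^ Suc m - x * a ^ (Suc m + 1)) * x ^ Suc m
        = a ^ Suc m * x ^ Suc m - x * a * (a ^ Suc m * x ^ Suc m)"
      by (simp only: left_diff_distrib mult.assoc Suc_eq_plus1[symmetric] power_Suc)
    then show ?thesis using L2[of m] by (simp add: mult.assoc)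
  qed
  have L4: "a * x = x * a * a * x"
  proof (rule ccontr)
    assume ne: "a * x \<noteq> x * a * a * x"
    define c where "c = norm (a * x - x * a * a * x)"
    have c0: "c > 0" unfolding c_def using ne by simp
    define \<delta> where "\<delta> = 1 / (2 * (norm x + 1))"
    have "0 < 2 * (norm x + 1)" by (smt (verit) norm_ge_zero)
    then have \<delta>0: "\<delta> > 0" unfolding \<delta>_def by simp
    have \<delta>x: "\<delta> * norm x \<le> 1/2" unfolding \<delta>_def by (rule half_lem) simp
    obtain N where N: "\<forall>n\<ge>N. norm (a ^ n - x * a ^ (n + 1)) \<le> \<delta> ^ n"
      using se \<delta>0 unfolding small_def by blast
    obtain n0 where n0: "(1/2::real) ^ n0 < c" using real_arch_pow_inv[OF c0, of "1/2"] by auto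
    define m where "m = n0 + N"
    have Nm: "norm (a ^ Suc m - x * a ^ (Suc m + 1)) \<le> \<delta> ^ Suc m"
      by (rule N[rule_format]) (simp add: m_def)
    have "c = norm ((a ^ Suc m - x * a ^ (Suc m + 1)) * x ^ Suc m)" unfolding c_def L3 ..
    also have "\<dots> \<le> norm (a ^ Suc m - x * a ^ (Suc m + 1)) * norm (x ^ Suc m)"
      by (rule norm_mult_ineq)
    also have "\<dots> \<le> \<delta> ^ Suc m * norm x ^ Suc m"
      using Nm \<delta>0 by (intro mult_mono norm_power_ineq) auto
    also have "\<dots> = (\<delta> * norm x) ^ Suc m" by (simp add: power_mult_distrib)
    also have "\<dots> \<le> (1/2) ^ Suc m" using \<delta>x \<delta>0 by (intro power_mono) auto
    also have "\<dots> \<le> (1/2) ^ n0" unfolding m_def by (intro power_decreasing) auto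
    finally show False using n0 by simp
  qed
  have L5: "x * a * x = x"
  proof -
    have "x = a * x * x" using ax2 by (simp add: mult.assoc)
    also have "a * x * x = x * a * a * x * x" by (simp only: L4[symmetric])
    also have "\<dots> = x * a * (a * (x * x))" by (simp only: mult.assoc)
    also have "\<dots> = x * a * x" by (simp only: ax2)
    finally show ?thesis by simp
  qed
  define z where "z = a * x * a"
  define y where "y = a - a * x * a"
  have azy: "a = z + y" unfolding z_def y_def by simp
  have zx: "z * x = a * x" unfolding z_def using L5 by (simp add: mult.assoc)
  have core: "is_core_inv z x" unfolding is_core_inv_def power2_eq_square
  proof (intro conjI)
    show "z * (x * x) = x" unfolding z_def using ax2 L5 by (simp add: mult.assoc)
    show "adj (z * x) = z * x" unfolding zx by (rule adjax)
    have "x * (z * z) = (x * a * x) * a * a * x * a" unfolding z_def by (simp add: mult.assoc)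
    also have "\<dots> = (x * a * a * x) * a" using L5 by (simp add: mult.assoc)
    also have "\<dots> = z" unfolding L4[symmetric] z_def ..
    finally show "x * (z * z) = z" .
  qed
  have aax: "a * (x * a * a * x) * a = a * (a * x) * a" using L4 by simp
  have yz: "y * z = 0" unfolding y_def z_def
    using aax by (simp add: algebra_simps mult.assoc)
  have zy: "adj z * y = 0"
  proof -
    have "adj z = adj a * adj (a * x)" unfolding z_def by (rule adj_mult)
    then have "adj z = adj a * (a * x)" unfolding adjax .
    moreover have "a * x * (a - a * x * a) = 0"
    proof -
      have "a * x * (a * x * a) = a * (x * a * x) * a" by (simp only: mult.assoc)
      also have "\<dots> = a * x * a" by (simp only: L5)
      finally have e: "a * x * (a * x * a) = a * x * a" .
      show ?thesis by (simp only: right_diff_distrib e diff_self)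
    qed
    ultimately show ?thesis unfolding y_def by (simp add: mult.assoc)
  qed
  define q where "q = 1 - a * x"
  have yq: "y = q * a" unfolding y_def q_def by (simp add: left_diff_distrib)
  have qx: "q * x = 0" unfolding q_def using ax2 by (simp add: left_diff_distrib mult.assoc)
  have L6: "q * (a ^ Suc k * x) = 0" for k
  proof (induction k)
    case 0
    have "a * x * (a * x) = a * x" using L5 by (simp add: mult.assoc)
    then show ?case unfolding q_def by (simp add: left_diff_distrib mult.assoc)
  next
    case (Suc k)
    have p: "a ^ Suc k * x = a * x * (a ^ Suc k * x)" using Suc unfolding q_def
      by (simp add: left_diff_distrib mult.assoc)
    have paa: "a * a * x = a * x * (a * a * x)"
    proof -
      have "a * x * (a * a * x) = a * (x * a * a * x)" by (simp add: mult.assoc)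
      then show ?thesis unfolding L4[symmetric] by (simp add: mult.assoc)
    qed
    have "a ^ Suc (Suc k) * x = a * (a ^ Suc k * x)" by (simp add: mult.assoc)
    also have "\<dots> = (a * a * x) * (a ^ Suc k * x)" by (subst p) (simp add: mult.assoc)
    also have "\<dots> = a * x * (a * a * x) * (a ^ Suc k * x)" by (subst paa) simp
    also have "\<dots> = a * x * (a * (a * x * (a ^ Suc k * x)))" by (simp add: mult.assoc)
    also have "\<dots> = a * x * (a * (a ^ Suc k * x))" by (simp only: p[symmetric])
    also have "\<dots> = a * x * (a ^ Suc (Suc k) * x)" by (simp add: mult.assoc)
    finally have "a ^ Suc (Suc k) * x = a * x * (a ^ Suc (Suc k) * x)" .
    then show ?case unfolding q_def by (simp add: left_diff_distrib)
  qed
  have L7: "y ^ Suc n = q * a ^ Suc n" for n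
  proof (induction n)
    case 0 then show ?case using yq by simp
  next
    case (Suc n)
    have "y ^ Suc (Suc n) = q * a ^ Suc n * (q * a)" using Suc yq by (simp only: power_Suc2)
    also have "\<dots> = q * a ^ Suc n * a - q * (a ^ Suc n * a * x) * a"
      unfolding q_def by (simp add: right_diff_distrib left_diff_distrib mult.assoc)
    also have "a ^ Suc n * a * x = a ^ Suc (Suc n) * x" by (simp only: power_Suc2[symmetric])
    also have "q * (a ^ Suc (Suc n) * x) = 0" by (rule L6)
    finally show ?case by (simp only: power_Suc2[of a "Suc n"] mult_zero_left diff_zero mult.assoc)
  qed
  have "small (\<lambda>n. y ^ n)"
  proof (rule small_le[OF _ se])
    fix n :: nat assume "n \<ge> 1"
    then obtain m where m: "n = Suc m" by (cases n) auto
    have "y ^ n = q * (a ^ n - x * a ^ (n + 1))"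
      unfolding m L7 by (simp add: right_diff_distrib mult.assoc[symmetric] qx)
    then show "norm (y ^ n) \<le> norm q * norm (a ^ n - x * a ^ (n + 1))"
      by (simp add: norm_mult_ineq)
  qed
  then have "y \<in> qnil" using qnil_iff by blast
  then show ?thesis using azy zy yz core by blast
qed

theorem corollary3p3:
  fixes a :: "'a::cbanach_star_algebra"
  shows "((\<exists>x. is_gcoreEP_inv a x) \<longleftrightarrow>
           (\<exists>z y. a = z + y \<and> adj z * y = 0 \<and> y * z = 0 \<and> (\<exists>c. is_core_inv z c) \<and> y \<in> qnil))
       \<and> ((\<exists>z y. a = z + y \<and> adj z * y = 0 \<and> y * z = 0 \<and> (\<exists>c. is_core_inv z c) \<and> y \<in> qnil) \<longleftrightarrow>
           (\<exists>z y. a = z + y \<and> y * z = 0 \<and> (\<exists>c. is_core_inv z c) \<and> y \<in> qnil))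
       \<and> (\<forall>z y c. a = z + y \<and> y * z = 0 \<and> y \<in> qnil \<and> is_core_inv z c \<longrightarrow> is_gcoreEP_inv a c)"
proof -
  have P3: "\<forall>z y c. a = z + y \<and> y * z = 0 \<and> y \<in> qnil \<and> is_core_inv z c \<longrightarrow> is_gcoreEP_inv a c"
    using part3 by blast
  have 31: "(\<exists>z y. a = z + y \<and> y * z = 0 \<and> (\<exists>c. is_core_inv z c) \<and> y \<in> qnil) \<Longrightarrow> (\<exists>x. is_gcoreEP_inv a x)"
    using P3 by blast
  have 12: "(\<exists>x. is_gcoreEP_inv a x) \<Longrightarrow>
      (\<exists>z y. a = z + y \<and> adj z * y = 0 \<and> y * z = 0 \<and> (\<exists>c. is_core_inv z c) \<and> y \<in> qnil)"
    using part1 by blast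
  show ?thesis
  proof (intro conjI iffI)
    show "\<exists>z y. a = z + y \<and> y * z = 0 \<and> (\<exists>c. is_core_inv z c) \<and> y \<in> qnil"
      if "\<exists>z y. a = z + y \<and> adj z * y = 0 \<and> y * z = 0 \<and> (\<exists>c. is_core_inv z c) \<and> y \<in> qnil"
      using that by blast
  qed (use 31 12 P3 in blast)+
qed

end
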